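(* Suppose an SCC $F$ is mixed-Nash-A-implemented by $\mathcal M=\langle M,g\rangle$. Let $(i,\theta)\in\mathcal I\times\Theta$ and $\lambda\in MNE^{(\mathcal M,\theta)}$. If $F(\theta)\subseteq\arg\min_{z\in Z^*}u_i^\theta(z)$, $\Xi_i(\theta)\ne\emptyset$, and $Z^*\cap\mathcal L_i^Z(F(\theta),\theta)$ is an $i$-$Z^*$-max set, then $$\bigcup_{m_i\in M_i}\mathrm{SUPP}[g(m_i,\lambda_{-i})]\subseteq Z^*\cap\mathcal L_i^Z(F(\theta),\theta)\cap\Big(\bigcup_{K\in\Xi_i(\theta)}\bigcap_{\theta'\in K}F(\theta')\Big).$$
   Context: Standing setup: $\mathcal I=\{1,\dots,I\}$ finite, $I\ge 3$; $\Theta$ finite or countably infinite; $Z$ finite; $Y=\Delta(Z)$; $u_i^\theta:Z\to\mathbb R$, $U_i^\theta(y)=\sum_zy_zu_i^\theta(z)$; $\mathcal L_i^Z(\alpha,\theta)=\{z\in Z:U_i^\theta(\alpha)\ge u_i^\theta(z)\}$ and $\mathcal L_i^Z(E,\theta)=\bigcap_{z\in E}\mathcal L_i^Z(z,\theta)$. A mechanism $\mathcal M=\langle M=\times_iM_i,g:M\to Y\rangle$ has countable $M_i$; $g(\lambda)$, $g(m_i,\lambda_{-i})$ are induced lotteries; $MNE^{(\mathcal M,\theta)}$ the mixed Nash equilibria at $\theta$. $F$ is mixed-Nash-A-implemented by $\mathcal M$ if $\bigcup_{\lambda\in MNE^{(\mathcal M,\theta)}}\mathrm{SUPP}(g[\lambda])=F(\theta)$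 for all $\theta$. A nonempty $E\subseteq Z$ is an $i$-max set if for some $\theta$, $E\subseteq\arg\max_{z\in E}u_i^\theta(z)$ and $E\subseteq\arg\max_{z\in Z}u_j^\theta(z)$ for all $j\ne i$. $Z^*=\bigcup_\theta F(\theta)$ if $Z$ is an $i$-max set for some $i$, else $Z^*=Z$. A nonempty $E\subseteq Z^*$ is an $i$-$Z^*$-$\theta$-max set if $E\subseteq\arg\max_{z\in E}u_i^\theta(z)$ and $E\subseteq\arg\max_{z\in Z^*}u_j^\theta(z)$ for all $j\ne i$; $\Lambda^i(E)=\{\theta:E\text{ is an }i\text{-}Z^*\text{-}\theta\text{-max set}\}$ ($=\emptyset$ for $E=\emptyset$); $E$ is an $i$-$Z^*$-max set if $\Lambda^i(E)\ne\emptyset$. $\Theta_i^\theta=\{\theta':F(\theta)\text{ is an }i\text{-}Z^*\text{-}\theta'\text{-max set and }F(\theta)\subseteq F(\theta')\}$; $\Xi_i(\theta)=\{K\subseteq\Theta_i^\theta,K\ne\emptyset:\Theta_i^\theta\cap\Lambda^i(Z^*\cap\mathcal L_i^Z(F(\theta),\theta)\cap\bigcap_{\theta'\in K}F(\theta'))=K\}$. *)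

theory Defs
  imports "HOL-Probability.Probability"
begin

text \<open>Messages: values of type 'm,
  agent i's message space is the (countable) set M i.\<close>

definition Uexp :: "('i \<Rightarrow> 'th \<Rightarrow> 'z::finite \<Rightarrow> real) \<Rightarrow> 'i \<Rightarrow> 'th \<Rightarrow> 'z pmf \<Rightarrow> real" where
  "Uexp u i th y = (\<Sum>z\<in>UNIV. pmf y z * u i th z)"

definition argmax_on :: "('z \<Rightarrow> real) \<Rightarrow> 'z set \<Rightarrow> 'z set" where
  "argmax_on f S = {z \<in> S. \<forall>z'\<in>S. f z' \<le> f z}"

definition argmin_on :: "('z \<Rightarrow> real) \<Rightarrow> 'z set \<Rightarrow> 'z set" where
  "argmin_on f S = {z \<in> S. \<forall>z'\<in>S. f z \<le> f z'}"

definition LZ :: "('i \<Rightarrow> 'th \<Rightarrow> 'z::finite \<Rightarrow> real) \<Rightarrow> 'i \<Rightarrow> 'z pmf \<Rightarrow> 'th \<Rightarrow> 'z set" where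
  "LZ u i \<alpha> th = {z. u i th z \<le> Uexp u i th \<alpha>}"

definition LZset :: "('i \<Rightarrow> 'th \<Rightarrow> 'z::finite \<Rightarrow> real) \<Rightarrow> 'i \<Rightarrow> 'z set \<Rightarrow> 'th \<Rightarrow> 'z set" where
  "LZset u i E th = (\<Inter>z\<in>E. LZ u i (return_pmf z) th)"

definition is_i_max_set :: "('i \<Rightarrow> 'th \<Rightarrow> 'z \<Rightarrow> real) \<Rightarrow> 'i \<Rightarrow> 'z set \<Rightarrow> bool" where
  "is_i_max_set u i E \<longleftrightarrow> E \<noteq> {} \<and> (\<exists>th. E \<subseteq> argmax_on (u i th) E \<and>
      (\<forall>j. j \<noteq> i \<longrightarrow> E \<subseteq> argmax_on (u j th) UNIV))"

definition Zstar :: "('i \<Rightarrow> 'th \<Rightarrow> 'z \<Rightarrow> real) \<Rightarrow> ('th \<Rightarrow> 'z set) \<Rightarrow> 'z set" where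
  "Zstar u F = (if \<exists>i. is_i_max_set u i UNIV then (\<Union>th. F th) else UNIV)"

definition is_iZ_th_max_set :: "('i \<Rightarrow> 'th \<Rightarrow> 'z \<Rightarrow> real) \<Rightarrow> ('th \<Rightarrow> 'z set) \<Rightarrow> 'i \<Rightarrow> 'z set \<Rightarrow> 'th \<Rightarrow> bool" where
  "is_iZ_th_max_set u F i E th \<longleftrightarrow> E \<noteq> {} \<and> E \<subseteq> Zstar u F \<and>
      E \<subseteq> argmax_on (u i th) E \<and>
      (\<forall>j. j \<noteq> i \<longrightarrow> E \<subseteq> argmax_on (u j th) (Zstar u F))"

definition Lam :: "('i \<Rightarrow> 'th \<Rightarrow> 'z \<Rightarrow> real) \<Rightarrow> ('th \<Rightarrow> 'z set) \<Rightarrow> 'i \<Rightarrow> 'z set \<Rightarrow> 'th set" where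
  "Lam u F i E = {th. is_iZ_th_max_set u F i E th}"

definition is_iZ_max_set :: "('i \<Rightarrow> 'th \<Rightarrow> 'z \<Rightarrow> real) \<Rightarrow> ('th \<Rightarrow> 'z set) \<Rightarrow> 'i \<Rightarrow> 'z set \<Rightarrow> bool" where
  "is_iZ_max_set u F i E \<longleftrightarrow> Lam u F i E \<noteq> {}"

definition Theta_i :: "('i \<Rightarrow> 'th \<Rightarrow> 'z \<Rightarrow> real) \<Rightarrow> ('th \<Rightarrow> 'z set) \<Rightarrow> 'i \<Rightarrow> 'th \<Rightarrow> 'th set" where
  "Theta_i u F i th = {th'. is_iZ_th_max_set u F i (F th) th' \<and> F th \<subseteq> F th'}"

definition Xi :: "('i \<Rightarrow> 'th \<Rightarrow> 'z::finite \<Rightarrow> real) \<Rightarrow> ('th \<Rightarrow> 'z set) \<Rightarrow> 'i \<Rightarrow> 'th \<Rightarrow> 'th set set" where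
  "Xi u F i th = {K. K \<subseteq> Theta_i u F i th \<and> K \<noteq> {} \<and>
      Theta_i u F i th \<inter> Lam u F i (Zstar u F \<inter> LZset u i (F th) th \<inter> (\<Inter>th'\<in>K. F th')) = K}"

definition mixed_profile :: "('i \<Rightarrow> 'm set) \<Rightarrow> ('i \<Rightarrow> 'm pmf) \<Rightarrow> bool" where
  "mixed_profile M lam \<longleftrightarrow> (\<forall>i. set_pmf (lam i) \<subseteq> M i)"

definition induced :: "(('i::finite \<Rightarrow> 'm) \<Rightarrow> 'z pmf) \<Rightarrow> ('i \<Rightarrow> 'm pmf) \<Rightarrow> 'z pmf" where
  "induced g lam = bind_pmf (Pi_pmf UNIV undefined lam) g"

definition MNE :: "('i::finite \<Rightarrow> 'th \<Rightarrow> 'z::finite \<Rightarrow> real) \<Rightarrow> ('i \<Rightarrow> 'm set) \<Rightarrow> (('i \<Rightarrow> 'm) \<Rightarrow> 'z pmf)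
     \<Rightarrow> 'th \<Rightarrow> ('i \<Rightarrow> 'm pmf) set" where
  "MNE u M g th = {lam. mixed_profile M lam \<and>
      (\<forall>i \<mu>. set_pmf \<mu> \<subseteq> M i \<longrightarrow>
          Uexp u i th (induced g (lam(i := \<mu>))) \<le> Uexp u i th (induced g lam))}"

definition mixed_nash_A_implements ::
  "('i::finite \<Rightarrow> 'th \<Rightarrow> 'z::finite \<Rightarrow> real) \<Rightarrow> ('th \<Rightarrow> 'z set) \<Rightarrow> ('i \<Rightarrow> 'm set) \<Rightarrow> (('i \<Rightarrow> 'm) \<Rightarrow> 'z pmf) \<Rightarrow> bool" where
  "mixed_nash_A_implements u F M g \<longleftrightarrow>
     (\<forall>i. countable (M i)) \<and>
     (\<forall>th. (\<Union>lam\<in>MNE u M g th. set_pmf (induced g lam)) = F th)"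

definition is_SCC :: "('th \<Rightarrow> 'z set) \<Rightarrow> bool" where
  "is_SCC F \<longleftrightarrow> (\<forall>th. F th \<noteq> {})"

end

theory Submission
  imports Defs
begin

lemma Uexp_le:
  assumes "\<And>z. z \<in> set_pmf y \<Longrightarrow> u i th z \<le> c"
  shows "Uexp u i th (y::'z::finite pmf) \<le> c"
proof -
  have "Uexp u i th y \<le> (\<Sum>z\<in>UNIV. pmf y z * c)"
    unfolding Uexp_def
    by (rule sum_mono) (metis assms mult_left_mono pmf_nonneg set_pmf_iff mult_zero_left order_refl)
  also have "\<dots> = c" by (simp add: sum_distrib_right[symmetric] sum_pmf_eq_1)
  finally show ?thesis .
qed

lemma Uexp_ge:
  assumes "\<And>z. z \<in> set_pmf y \<Longrightarrow> c \<le> u i th z"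
  shows "c \<le> Uexp u i th (y::'z::finite pmf)"
proof -
  have "(\<Sum>z\<in>UNIV. pmf y z * c) \<le> Uexp u i th y"
    unfolding Uexp_def
    by (rule sum_mono) (metis assms mult_left_mono pmf_nonneg set_pmf_iff mult_zero_left order_refl)
  moreover have "(\<Sum>z\<in>UNIV. pmf y z * c) = c" by (simp add: sum_distrib_right[symmetric] sum_pmf_eq_1)
  ultimately show ?thesis by simp
qed

lemma Uexp_return: "Uexp u i th (return_pmf (w::'z::finite)) = u i th w"
  by (intro antisym Uexp_le Uexp_ge) auto

lemma Uexp_supp_eq:
  assumes "\<And>z. z \<in> set_pmf y \<Longrightarrow> c \<le> u i th z" "Uexp u i th (y::'z::finite pmf) \<le> c"
    and z: "z \<in> set_pmf y"
  shows "u i th z = c"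
proof -
  have s: "Uexp u i th y - c = (\<Sum>z\<in>UNIV. pmf y z * (u i th z - c))"
    unfolding Uexp_def by (simp add: right_diff_distrib sum_subtractf sum_distrib_right[symmetric] sum_pmf_eq_1)
  have nn: "\<forall>z\<in>UNIV. 0 \<le> pmf y z * (u i th z - c)"
    by (metis assms(1) diff_ge_0_iff_ge mult_nonneg_nonneg mult_zero_left pmf_nonneg set_pmf_iff order_refl)
  have "(\<Sum>z\<in>UNIV. pmf y z * (u i th z - c)) = 0"
  proof -
    have "0 \<le> (\<Sum>z\<in>UNIV. pmf y z * (u i th z - c))" using nn by (simp add: sum_nonneg)
    thus ?thesis using s assms(2) by linarith
  qed
  hence "pmf y z * (u i th z - c) = 0" using nn sum_nonneg_eq_0_iff[of UNIV "\<lambda>z. pmf y z * (u i th z - c)"] by simp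
  moreover have "pmf y z > 0" using z by (simp add: pmf_positive)
  ultimately show ?thesis by simp
qed

lemma set_induced:
  "set_pmf (induced g L) = (\<Union>f\<in>{f. \<forall>k. f k \<in> set_pmf (L k)}. set_pmf (g f))"
  unfolding induced_def by (simp add: set_Pi_pmf PiE_dflt_def)

lemma set_induced_upd:
  "set_pmf (induced g (L(i:=\<mu>))) = (\<Union>m\<in>set_pmf \<mu>. set_pmf (induced g (L(i:=return_pmf m))))"
  unfolding set_induced
  by (auto split: if_splits)

lemma mixed_upd: "mixed_profile M L \<Longrightarrow> set_pmf \<mu> \<subseteq> M j \<Longrightarrow> mixed_profile M (L(j:=\<mu>))"
  unfolding mixed_profile_def by auto

lemma NE_suff:
  fixes u :: "'i::finite \<Rightarrow> 'th \<Rightarrow> 'z::finite \<Rightarrow> real"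
  assumes mp: "mixed_profile M L"
    and Si: "\<And>\<mu>. set_pmf \<mu> \<subseteq> M i \<Longrightarrow> set_pmf (induced g (L(i:=\<mu>))) \<subseteq> S"
    and SL: "set_pmf (induced g L) \<subseteq> S"
    and maxj: "\<And>j z z'. j \<noteq> i \<Longrightarrow> z \<in> S \<Longrightarrow> z' \<in> Zs \<Longrightarrow> u j th' z' \<le> u j th' z"
    and R: "\<And>j \<mu>. set_pmf \<mu> \<subseteq> M j \<Longrightarrow> set_pmf (induced g (L(j:=\<mu>))) \<subseteq> Zs"
    and ind: "\<And>z. z \<in> S \<Longrightarrow> u i th' z = c"
  shows "L \<in> MNE u M g th'"
  unfolding MNE_def
proof (intro CollectI conjI allI impI mp)
  fix j \<mu> assume mu: "set_pmf \<mu> \<subseteq> M j"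
  show "Uexp u j th' (induced g (L(j := \<mu>))) \<le> Uexp u j th' (induced g L)"
  proof (cases "j = i")
    case True
    have "Uexp u j th' (induced g (L(j := \<mu>))) \<le> c"
      by (rule Uexp_le) (use Si mu ind True in auto)
    also have "c \<le> Uexp u j th' (induced g L)"
      by (rule Uexp_ge) (use SL ind True in auto)
    finally show ?thesis .
  next
    case False
    define A where "A = u j th' ` set_pmf (induced g L)"
    have fA: "finite A" "A \<noteq> {}" unfolding A_def by (auto simp: set_pmf_not_empty)
    have "Uexp u j th' (induced g (L(j := \<mu>))) \<le> Min A"
    proof (rule Uexp_le)
      fix z assume z: "z \<in> set_pmf (induced g (L(j := \<mu>)))"
      hence "z \<in> Zs" using R mu by auto
      thus "u j th' z \<le> Min A" using fA maxj[OF False] SL unfolding A_def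
        by (auto simp: Min_ge_iff)
    qed
    also have "Min A \<le> Uexp u j th' (induced g L)"
      by (rule Uexp_ge) (use fA in \<open>auto simp: A_def\<close>)
    finally show ?thesis .
  qed
qed

lemma R_lemma:
  fixes u :: "'i::finite \<Rightarrow> 'th \<Rightarrow> 'z::finite \<Rightarrow> real"
  assumes impl: "mixed_nash_A_implements u F M g" and mp: "mixed_profile M L"
  shows "set_pmf (induced g L) \<subseteq> Zstar u F"
proof (cases "\<exists>i. is_i_max_set u i UNIV")
  case False thus ?thesis by (simp add: Zstar_def)
next
  case True
  then obtain i0 th0 where h1: "UNIV \<subseteq> argmax_on (u i0 th0) UNIV"
      and h2: "\<forall>j. j \<noteq> i0 \<longrightarrow> UNIV \<subseteq> argmax_on (u j th0) UNIV"
    unfolding is_i_max_set_def by blast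
  have const: "\<And>j z z'. u j th0 z' \<le> u j th0 z"
  proof -
    fix j z z'
    show "u j th0 z' \<le> u j th0 z"
    proof (cases "j = i0")
      case True thus ?thesis using h1 unfolding argmax_on_def by auto
    next
      case False thus ?thesis using h2 unfolding argmax_on_def by auto
    qed
  qed
  have "L \<in> MNE u M g th0"
    unfolding MNE_def
  proof (intro CollectI conjI allI impI mp)
    fix j \<mu>
    have "Uexp u j th0 (induced g (L(j := \<mu>))) \<le> u j th0 undefined"
      by (rule Uexp_le) (rule const)
    also have "\<dots> \<le> Uexp u j th0 (induced g L)"
      by (rule Uexp_ge) (rule const)
    finally show "Uexp u j th0 (induced g (L(j := \<mu>))) \<le> Uexp u j th0 (induced g L)" .
  qed
  hence "set_pmf (induced g L) \<subseteq> F th0" using impl unfolding mixed_nash_A_implements_def by blast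
  thus ?thesis using True by (auto simp: Zstar_def)
qed

theorem lemma7:
  fixes u :: "'i::finite \<Rightarrow> 'th::countable \<Rightarrow> 'z::finite \<Rightarrow> real"
    and F :: "'th \<Rightarrow> 'z set"
    and M :: "'i \<Rightarrow> 'm set"
    and g :: "('i \<Rightarrow> 'm) \<Rightarrow> 'z pmf"
    and i :: 'i and th :: 'th and lam :: "'i \<Rightarrow> 'm pmf"
  assumes "CARD('i) \<ge> 3"
    and "is_SCC F"
    and "mixed_nash_A_implements u F M g"
    and "lam \<in> MNE u M g th"
    and "F th \<subseteq> argmin_on (u i th) (Zstar u F)"
    and "Xi u F i th \<noteq> {}"
    and "is_iZ_max_set u F i (Zstar u F \<inter> LZset u i (F th) th)"
  shows "(\<Union>mi\<in>M i. set_pmf (induced g (lam(i := return_pmf mi))))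
           \<subseteq> Zstar u F \<inter> LZset u i (F th) th \<inter> (\<Union>K\<in>Xi u F i th. \<Inter>th'\<in>K. F th')"
proof -
  define Zs where "Zs = Zstar u F"
  define E where "E = Zs \<inter> LZset u i (F th) th"
  have impl: "\<And>t. (\<Union>l\<in>MNE u M g t. set_pmf (induced g l)) = F t"
    using assms(3) unfolding mixed_nash_A_implements_def by blast
  have R: "\<And>L. mixed_profile M L \<Longrightarrow> set_pmf (induced g L) \<subseteq> Zs"
    unfolding Zs_def by (rule R_lemma[OF assms(3)])
  have FZ: "F th \<subseteq> Zs" unfolding Zs_def Zstar_def by auto
  obtain w0 where w0: "w0 \<in> F th" using assms(2) unfolding is_SCC_def by blast
  define c0 where "c0 = u i th w0"
  have w0m: "\<forall>z'\<in>Zs. u i th w0 \<le> u i th z'" using assms(5) w0 unfolding argmin_on_def Zs_def by auto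
  have Fc: "\<And>z. z \<in> F th \<Longrightarrow> u i th z = c0"
  proof -
    fix z assume z: "z \<in> F th"
    hence "\<forall>z'\<in>Zs. u i th z \<le> u i th z'" using assms(5) unfolding argmin_on_def Zs_def by auto
    thus "u i th z = c0" using w0m z w0 FZ unfolding c0_def by (meson antisym subsetD)
  qed
  have Zc: "\<And>z. z \<in> Zs \<Longrightarrow> c0 \<le> u i th z" using w0m c0_def by auto
  have LZ_eq: "LZset u i (F th) th = {z. u i th z \<le> c0}"
    unfolding LZset_def LZ_def Uexp_return using Fc w0 by auto
  define T where "T = (\<Union>l\<in>MNE u M g th. \<Union>mi\<in>M i. set_pmf (induced g (l(i := return_pmf mi))))"
  have dev_E: "set_pmf (induced g (l(i:=return_pmf mi))) \<subseteq> E"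
    if l: "l \<in> MNE u M g th" and mi: "mi \<in> M i" for l mi
  proof
    fix z assume z: "z \<in> set_pmf (induced g (l(i:=return_pmf mi)))"
    have mpl: "mixed_profile M l" using l unfolding MNE_def by auto
    have mp2: "mixed_profile M (l(i:=return_pmf mi))" using mpl mi by (intro mixed_upd) auto
    have supZ: "set_pmf (induced g (l(i:=return_pmf mi))) \<subseteq> Zs" using R[OF mp2] .
    have "set_pmf (induced g l) \<subseteq> F th" using impl[of th] l by blast
    hence "Uexp u i th (induced g l) \<le> c0" by (intro Uexp_le) (use Fc in auto)
    moreover have "Uexp u i th (induced g (l(i:=return_pmf mi))) \<le> Uexp u i th (induced g l)"
      using l mi unfolding MNE_def by auto
    ultimately have "u i th z = c0"
      by (intro Uexp_supp_eq[OF _ _ z]) (use supZ Zc in auto)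
    thus "z \<in> E" using supZ z unfolding E_def LZ_eq by auto
  qed
  have TE: "T \<subseteq> E" unfolding T_def using dev_E by blast
  have FE: "F th \<subseteq> E" unfolding E_def LZ_eq using FZ Fc by auto
  have KL: "t \<in> Theta_i u F i th \<and> T \<union> F th \<subseteq> F t"
    if S1: "T \<union> F th \<subseteq> S" and S2: "S \<subseteq> E" and St: "t \<in> Lam u F i S" for S t
  proof -
    have SZ: "S \<subseteq> Zs" and Sarg: "S \<subseteq> argmax_on (u i t) S"
      and Sj: "\<And>j. j \<noteq> i \<Longrightarrow> S \<subseteq> argmax_on (u j t) Zs"
      using St unfolding Lam_def is_iZ_th_max_set_def Zs_def by auto
    have s0: "w0 \<in> S" using S1 w0 by auto
    have ind: "\<And>z. z \<in> S \<Longrightarrow> u i t z = u i t w0"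
    proof -
      fix z assume z: "z \<in> S"
      have "u i t w0 \<le> u i t z" using Sarg z s0 unfolding argmax_on_def by blast
      moreover have "u i t z \<le> u i t w0" using Sarg z s0 unfolding argmax_on_def by blast
      ultimately show "u i t z = u i t w0" by simp
    qed
    have maxj: "\<And>j z z'. j \<noteq> i \<Longrightarrow> z \<in> S \<Longrightarrow> z' \<in> Zs \<Longrightarrow> u j t z' \<le> u j t z"
      using Sj unfolding argmax_on_def by blast
    have MNEt: "l \<in> MNE u M g t \<and> (\<forall>mi\<in>M i. l(i:=return_pmf mi) \<in> MNE u M g t)"
      if l: "l \<in> MNE u M g th" for l
    proof -
      have mpl: "mixed_profile M l" using l unfolding MNE_def by auto
      have Si: "set_pmf (induced g (l(i:=\<mu>))) \<subseteq> S" if "set_pmf \<mu> \<subseteq> M i" for \<mu>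
      proof
        fix z assume "z \<in> set_pmf (induced g (l(i:=\<mu>)))"
        then obtain m where m: "m \<in> set_pmf \<mu>" and z: "z \<in> set_pmf (induced g (l(i:=return_pmf m)))"
          using set_induced_upd[of g l i \<mu>] by blast
        have "m \<in> M i" using m that by blast
        hence "z \<in> T" using z l unfolding T_def by blast
        thus "z \<in> S" using S1 by blast
      qed
      have SL: "set_pmf (induced g l) \<subseteq> S" using impl[of th] l S1 by blast
      show ?thesis
      proof (intro conjI ballI)
        show "l \<in> MNE u M g t"
          apply (rule NE_suff[where Zs=Zs and S=S and c="u i t w0" and u=u and i=i and th'=t and g=g and M=M])
               apply (rule mpl)
              apply (erule Si)
             apply (rule SL)
            apply (erule (2) maxj)
           apply (rule R, rule mixed_upd[OF mpl], assumption)
          apply (erule ind)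
          done
      next
        fix mi assume mi: "mi \<in> M i"
        have mp2: "mixed_profile M (l(i:=return_pmf mi))" using mpl mi by (intro mixed_upd) auto
        have SL2: "set_pmf (induced g (l(i := return_pmf mi))) \<subseteq> S"
        proof -
          have "set_pmf (induced g (l(i := return_pmf mi))) \<subseteq> T" using l mi unfolding T_def by blast
          thus ?thesis using S1 by blast
        qed
        show "l(i:=return_pmf mi) \<in> MNE u M g t"
          apply (rule NE_suff[where Zs=Zs and S=S and c="u i t w0" and u=u and i=i and th'=t and g=g and M=M])
               apply (rule mp2)
              apply (simp only: fun_upd_upd, erule Si)
             apply (rule SL2)
            apply (erule (2) maxj)
           apply (rule R, rule mixed_upd[OF mp2], assumption)
          apply (erule ind)
          done
      qed
    qed
    have FF: "F th \<subseteq> F t"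
    proof -
      have "F th = (\<Union>l\<in>MNE u M g th. set_pmf (induced g l))" using impl by simp
      also have "\<dots> \<subseteq> (\<Union>l\<in>MNE u M g t. set_pmf (induced g l))" using MNEt by blast
      finally show ?thesis using impl by simp
    qed
    have TF: "T \<subseteq> F t"
    proof
      fix z assume "z \<in> T"
      then obtain l mi where l: "l \<in> MNE u M g th" and mi: "mi \<in> M i"
        and z: "z \<in> set_pmf (induced g (l(i := return_pmf mi)))" unfolding T_def by blast
      have "l(i := return_pmf mi) \<in> MNE u M g t" using MNEt[OF l] mi by blast
      thus "z \<in> F t" using z impl[of t] by blast
    qed
    have "is_iZ_th_max_set u F i (F th) t"
      unfolding is_iZ_th_max_set_def
    proof (intro conjI allI impI)
      show "F th \<noteq> {}" using w0 by auto
      show "F th \<subseteq> Zstar u F" using FZ Zs_def by simp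
      show "F th \<subseteq> argmax_on (u i t) (F th)" unfolding argmax_on_def
      proof (intro subsetI CollectI conjI ballI)
        fix z z' assume "z \<in> F th" "z' \<in> F th"
        hence "z \<in> S" "z' \<in> S" using S1 by auto
        thus "u i t z' \<le> u i t z" using ind by simp
      qed
      fix j assume "j \<noteq> i"
      thus "F th \<subseteq> argmax_on (u j t) (Zstar u F)" using Sj S1 Zs_def by blast
    qed
    thus ?thesis using FF TF unfolding Theta_i_def by auto
  qed
  define \<Theta> where "\<Theta> = Theta_i u F i th"
  define SK where "SK K = E \<inter> (\<Inter>th'\<in>K. F th')" for K
  define phi where "phi K = \<Theta> \<inter> Lam u F i (SK K)" for K
  define G where "G = {t. T \<union> F th \<subseteq> F t}"
  have Xi_eq: "Xi u F i th = {K. K \<subseteq> \<Theta> \<and> K \<noteq> {} \<and> phi K = K}"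
    unfolding Xi_def phi_def SK_def \<Theta>_def E_def Zs_def by (simp add: Int_assoc)
  have Lam_anti: "Lam u F i S' \<subseteq> Lam u F i S" if "S \<subseteq> S'" "S \<noteq> {}" for S S'
    using that unfolding Lam_def is_iZ_th_max_set_def argmax_on_def by blast
  have SK_in: "T \<union> F th \<subseteq> SK K" if "K \<subseteq> G" for K
    using that TE FE unfolding SK_def G_def by blast
  have SK_E: "SK K \<subseteq> E" for K unfolding SK_def by blast
  have phiG: "phi K \<subseteq> \<Theta> \<inter> G" if "K \<subseteq> G" for K
    using KL[OF SK_in[OF that] SK_E] unfolding phi_def \<Theta>_def G_def by blast
  define P where "P K = (K \<subseteq> \<Theta> \<inter> G \<and> K \<subseteq> phi K)" for K
  have "P {}" unfolding P_def by simp
  then obtain K0 where PK0: "P K0" and K0min: "\<And>K. P K \<Longrightarrow> card (SK K0) \<le> card (SK K)"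
    using ex_has_least_nat[of P "{}" "\<lambda>K. card (SK K)"] by blast
  define Ks where "Ks = phi K0"
  have K0s: "K0 \<subseteq> Ks" using PK0 unfolding P_def Ks_def by simp
  have KsG: "Ks \<subseteq> \<Theta> \<inter> G" using phiG PK0 unfolding P_def Ks_def by blast
  have SKsub: "SK Ks \<subseteq> SK K0" using K0s unfolding SK_def by blast
  have SKne: "SK Ks \<noteq> {}" using SK_in[of Ks] KsG w0 by blast
  have "phi K0 \<subseteq> phi Ks" unfolding phi_def using Lam_anti[OF SKsub SKne] by blast
  hence "P Ks" using KsG unfolding P_def Ks_def by simp
  hence "card (SK K0) \<le> card (SK Ks)" by (rule K0min)
  hence "SK Ks = SK K0" using SKsub card_mono[OF finite SKsub] by (intro card_subset_eq) auto
  hence fixK: "phi Ks = Ks" unfolding phi_def Ks_def by simp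
  have LE: "Lam u F i E \<noteq> {}" using assms(7) unfolding is_iZ_max_set_def E_def Zs_def .
  have LEsub: "Lam u F i E \<subseteq> \<Theta>"
    using KL[of E] TE FE unfolding \<Theta>_def by blast
  have "SK K0 \<noteq> {}" using SK_in[of K0] PK0 w0 unfolding P_def by blast
  hence "Lam u F i E \<subseteq> Ks"
    using Lam_anti[OF SK_E] LEsub unfolding Ks_def phi_def by blast
  hence "Ks \<noteq> {}" using LE by blast
  hence KsXi: "Ks \<in> Xi u F i th" unfolding Xi_eq using fixK KsG by blast
  show ?thesis
  proof
    fix z assume z: "z \<in> (\<Union>mi\<in>M i. set_pmf (induced g (lam(i := return_pmf mi))))"
    have zT: "z \<in> T" using z assms(4) unfolding T_def by blast
    have "z \<in> E" using zT TE by blast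
    moreover have "z \<in> (\<Inter>th'\<in>Ks. F th')" using zT KsG unfolding G_def by blast
    ultimately show "z \<in> Zstar u F \<inter> LZset u i (F th) th \<inter> (\<Union>K\<in>Xi u F i th. \<Inter>th'\<in>K. F th')"
      using KsXi unfolding E_def Zs_def by blast
  qed
qed

end
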